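(* Let $\lambda>0$. On $\mathbb{R}^2$ with light-cone coordinates $(u,v)$, consider the operator $P = 4\partial_u\partial_v + 4\lambda^{-4}uv$ (the massless wave operator with Grosse–Wulkenhaar potential, $\partial_\mu\partial^\mu + 4\lambda^{-4}x_\mu x^\mu$, written in light-cone coordinates). Define $$V(u_1,v_1;u_2,v_2)=\sum_{n=0}^\infty (-1)^n \frac{(u_1^2-u_2^2)^n}{2^n\lambda^{2n}n!}\,\frac{(v_1^2-v_2^2)^n}{2^n\lambda^{2n}n!}$$ and $$\Delta_{\mathrm{ret}}(u_1,v_1;u_2,v_2)=\tfrac12 H(u_1-u_2)H(v_1-v_2)\,V(u_1,v_1;u_2,v_2),$$ where $H$ is the Heaviside function. Then the series defining $V$ converges for all arguments to an entire (real-analytic) function, and $\Delta_{\mathrm{ret}}$ is the retarded propagator of $P$: it is supported in $\{u_1\ge u_2,\ v_1\ge v_2\}$ and, as a distribution in $(u_1,v_1)$ for fixed $(u_2,v_2)$, $$\big(4\partial_{u_1}\partial_{v_1}+4\lambda^{-4}u_1v_1\big)\Delta_{\mathrm{ret}}(u_1,v_1;u_2,v_2)=2\,\delta(u_1-u_2)\,\delta(v_1-v_2),$$ i.e. equals $\delta^{(2)}(x_1-x_2)$ in the original Minkowski coordinates. Equivalently, $\Delta_{\mathrm{ret}}=\tfrac12 H(u_1-u_2)H(v_1-v_2)\,J_0\big(\lambda^{-2}\sqrt{(u_1^2-u_2^2)(v_1^2-v_2^2)}\big)$ with $J_0$ the Bessel function of order $0$. *)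

theory Defs
  imports "HOL-Analysis.Analysis"
begin

definition heaviside :: "real \<Rightarrow> real" where
  "heaviside x = (if x \<ge> 0 then 1 else 0)"

text \<open>The n-th term of the series V, over any real normed field
  (complex arguments are used to express that V is entire).\<close>
definition Vterm :: "real \<Rightarrow> 'a::real_normed_field \<Rightarrow> 'a \<Rightarrow> 'a \<Rightarrow> 'a \<Rightarrow> nat \<Rightarrow> 'a" where
  "Vterm lam u1 v1 u2 v2 n =
     (-1) ^ n * ((u1\<^sup>2 - u2\<^sup>2) ^ n / of_real (2 ^ n * lam ^ (2 * n) * fact n))
              * ((v1\<^sup>2 - v2\<^sup>2) ^ n / of_real (2 ^ n * lam ^ (2 * n) * fact n))"

definition V :: "real \<Rightarrow> real \<Rightarrow> real \<Rightarrow> real \<Rightarrow> real \<Rightarrow> real" where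
  "V lam u1 v1 u2 v2 = (\<Sum>n. Vterm lam u1 v1 u2 v2 n)"

definition Delta_ret :: "real \<Rightarrow> real \<Rightarrow> real \<Rightarrow> real \<Rightarrow> real \<Rightarrow> real" where
  "Delta_ret lam u1 v1 u2 v2 =
     1 / 2 * heaviside (u1 - u2) * heaviside (v1 - v2) * V lam u1 v1 u2 v2"

definition bessel_J0 :: "complex \<Rightarrow> complex" where
  "bessel_J0 z = (\<Sum>n. (-1) ^ n * (z / 2) ^ (2 * n) / of_real ((fact n)\<^sup>2))"

fun Ck :: "nat \<Rightarrow> (real \<times> real \<Rightarrow> real) \<Rightarrow> bool" where
  "Ck 0 f = continuous_on UNIV f"
| "Ck (Suc k) f = (\<exists>D1 D2. (\<forall>x. (f has_derivative (\<lambda>h. D1 x * fst h + D2 x * snd h)) (at x))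
                            \<and> Ck k D1 \<and> Ck k D2)"

definition smooth2 :: "(real \<times> real \<Rightarrow> real) \<Rightarrow> bool" where
  "smooth2 f = (\<forall>k. Ck k f)"

definition test_function :: "(real \<times> real \<Rightarrow> real) \<Rightarrow> bool" where
  "test_function f = (smooth2 f \<and> compact (closure {x. f x \<noteq> 0}))"

definition d_uv :: "(real \<times> real \<Rightarrow> real) \<Rightarrow> real \<times> real \<Rightarrow> real" where
  "d_uv f x = deriv (\<lambda>u. deriv (\<lambda>v. f (u, v)) (snd x)) (fst x)"

text \<open>The operator P = 4 \<partial>_u \<partial>_v + 4 \<lambda>^{-4} u v (formally self-adjoint).\<close>
definition P_op :: "real \<Rightarrow> (real \<times> real \<Rightarrow> real) \<Rightarrow> real \<times> real \<Rightarrow> real" where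
  "P_op lam f x = 4 * d_uv f x + 4 / lam ^ 4 * fst x * snd x * f x"

end

theory Submission
  imports Defs
begin


definition cW :: "nat \<Rightarrow> real" where "cW n = (-1)^n / (fact n)^2"
definition W :: "real \<Rightarrow> real" where "W t = (\<Sum>n. cW n * t^n)"
definition Q :: "real \<Rightarrow> real" where "Q t = (\<Sum>n. diffs cW n * t^n)"
definition Q2 :: "real \<Rightarrow> real" where "Q2 t = (\<Sum>n. diffs (diffs cW) n * t^n)"

lemma summ_bound:
  fixes e :: "nat \<Rightarrow> real"
  assumes "\<And>n. \<bar>e n\<bar> \<le> 1 / fact n"
  shows "summable (\<lambda>n. e n * y^n)"
proof (rule summable_comparison_test)
  show "\<exists>N. \<forall>n\<ge>N. norm (e n * y ^ n) \<le> inverse (fact n) * \<bar>y\<bar>^n"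
    using assms by (auto simp: abs_mult power_abs divide_inverse intro!: mult_right_mono)
  show "summable (\<lambda>n. inverse (fact n) * \<bar>y\<bar>^n)" by (rule summable_exp)
qed

lemma cW_bound: "\<bar>cW n\<bar> \<le> 1 / fact n"
proof -
  have "(1::real) \<le> fact n" by simp
  then have "1 / (fact n)^2 \<le> (1::real) / fact n"
    by (simp add: power2_eq_square divide_simps)
  then show ?thesis by (simp add: cW_def abs_divide)
qed

lemma dcW_bound: "\<bar>diffs cW n\<bar> \<le> 1 / fact n"
proof -
  have f: "(1::real) \<le> fact (Suc n)" by (rule fact_ge_1)
  have "\<bar>diffs cW n\<bar> = of_nat (Suc n) / (fact (Suc n))^2"
    by (simp add: diffs_def cW_def abs_divide abs_mult)
  also have "\<dots> = 1 / (fact n * fact (Suc n))"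
  proof -
    have h1: "fact (Suc n) = ((real n + 1) * fact n :: real)" by (simp add: fact_Suc algebra_simps)
    have fp: "fact n \<noteq> (0::real)" by simp
    show ?thesis using fp by (simp add: power2_eq_square h1 divide_simps del: of_nat_Suc fact_Suc)
  qed
  also have "\<dots> \<le> 1 / fact n"
  proof (rule divide_left_mono)
    show "fact n \<le> fact n * (fact (Suc n)::real)" using f mult_left_mono[of 1 "fact (Suc n)" "fact n::real"] by simp
  qed auto
  finally show ?thesis .
qed

lemma ddcW_bound: "\<bar>diffs (diffs cW) n\<bar> \<le> 1 / fact n"
proof -
  have f: "(1::real) \<le> fact (Suc (Suc n))" by (rule fact_ge_1)
  have "\<bar>diffs (diffs cW) n\<bar> = of_nat (Suc n) * of_nat (Suc (Suc n)) / (fact (Suc (Suc n)))^2"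
    by (simp add: diffs_def cW_def abs_divide abs_mult)
  also have "\<dots> = 1 / (fact n * fact (Suc (Suc n)))"
  proof -
    have h2: "fact (Suc (Suc n)) = ((real n + 2) * ((real n + 1) * fact n) :: real)"
        by (simp add: fact_Suc algebra_simps)
    have fp: "fact n \<noteq> (0::real)" by simp
    show ?thesis using fp by (simp add: power2_eq_square h2 divide_simps del: of_nat_Suc fact_Suc) (simp add: algebra_simps)
  qed
  also have "\<dots> \<le> 1 / fact n"
  proof (rule divide_left_mono)
    show "fact n \<le> fact n * (fact (Suc (Suc n))::real)" using f mult_left_mono[of 1 "fact (Suc (Suc n))" "fact n::real"] by simp
  qed auto
  finally show ?thesis .
qed

lemma W_deriv: "(W has_field_derivative Q t) (at t)"
  unfolding W_def[abs_def] Q_def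
  by (rule termdiffs_strong_converges_everywhere, rule summ_bound, rule cW_bound)

lemma Q_deriv: "(Q has_field_derivative Q2 t) (at t)"
  unfolding Q2_def Q_def[abs_def]
  by (rule termdiffs_strong_converges_everywhere, rule summ_bound, rule dcW_bound)

lemma W0: "W 0 = 1"
proof -
  have "W 0 = (\<Sum>n. cW n * 0^n)" by (simp add: W_def)
  also have "\<dots> = (\<Sum>n\<in>{0}. cW n * 0^n)" by (rule suminf_finite) auto
  also have "\<dots> = cW 0" by simp
  finally show ?thesis by (simp add: cW_def)
qed

lemma QW: "Q t + t * Q2 t = - W t"
proof -
  have s1: "(\<lambda>n. diffs cW n * t^n) sums Q t"
    unfolding Q_def by (rule summable_sums, rule summ_bound, rule dcW_bound)
  have s2: "(\<lambda>n. diffs (diffs cW) n * t^n) sums Q2 t"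
    unfolding Q2_def by (rule summable_sums, rule summ_bound, rule ddcW_bound)
  have s3: "(\<lambda>n. cW n * t^n) sums W t"
    unfolding W_def by (rule summable_sums, rule summ_bound, rule cW_bound)
  define f where "f m = (if m = 0 then 0 else diffs (diffs cW) (m - 1) * t^m)" for m
  have "(\<lambda>n. f (Suc n)) sums (t * Q2 t)"
    using sums_mult[OF s2, of t] by (simp add: f_def mult_ac)
  then have "f sums (t * Q2 t + f 0)" by (simp only: sums_Suc_iff)
  then have s4: "f sums (t * Q2 t)" by (simp add: f_def)
  have "(\<lambda>n. diffs cW n * t^n + f n) sums (Q t + t * Q2 t)"
    by (rule sums_add[OF s1 s4])
  moreover have "(\<lambda>n. diffs cW n * t^n + f n) = (\<lambda>n. - (cW n * t^n))"
  proof
    fix n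
    show "diffs cW n * t^n + f n = - (cW n * t^n)"
    proof (cases n)
      case 0 then show ?thesis by (simp add: f_def diffs_def cW_def)
    next
      case (Suc m)
      have h2: "fact (Suc (Suc m)) = ((real m + 2) * ((real m + 1) * fact m) :: real)"
        by (simp add: fact_Suc algebra_simps)
      have h1: "fact (Suc m) = ((real m + 1) * fact m :: real)"
        by (simp add: fact_Suc algebra_simps)
      have fp: "fact m \<noteq> (0::real)" by simp
      show ?thesis using Suc fp
        by (simp add: f_def diffs_def cW_def power2_eq_square h1 h2 divide_simps del: of_nat_Suc fact_Suc)
           (simp add: algebra_simps)
    qed
  qed
  ultimately have "(\<lambda>n. - (cW n * t^n)) sums (Q t + t * Q2 t)" by simp
  moreover have "(\<lambda>n. - (cW n * t^n)) sums (- W t)" by (rule sums_minus[OF s3])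
  ultimately show ?thesis using sums_unique2 by blast
qed



definition al :: "real \<Rightarrow> real \<Rightarrow> real \<Rightarrow> real" where
  "al lam c x = (x^2 - c^2) / (2 * lam^2)"

lemma pow_aux:
  fixes x :: "'a::real_normed_field"
  assumes "lam \<noteq> 0"
  shows "x^n / of_real (2 ^ n * lam ^ (2 * n) * fact n) = (x / of_real (2*lam^2))^n / of_real (fact n)"
proof -
  have "of_real (2 ^ n * lam ^ (2 * n) * fact n) = (of_real (2*lam^2) :: 'a)^n * of_real (fact n)"
    by (simp add: power_mult power_mult_distrib)
  then show ?thesis by (simp add: power_divide)
qed

lemma Vterm_alt:
  fixes u1 v1 u2 v2 :: "'a::real_normed_field"
  assumes "lam \<noteq> 0"
  shows "Vterm lam u1 v1 u2 v2 n = (-1)^n * (((u1\<^sup>2 - u2\<^sup>2) / of_real (2*lam^2))^n / of_real (fact n))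
     * (((v1\<^sup>2 - v2\<^sup>2) / of_real (2*lam^2))^n / of_real (fact n))"
  unfolding Vterm_def pow_aux[OF assms] ..

lemma Vterm_real:
  assumes "lam \<noteq> 0"
  shows "Vterm lam u1 v1 u2 v2 n = cW n * (al lam u2 u1 * al lam v2 v1)^n"
  unfolding Vterm_alt[OF assms] cW_def al_def power_mult_distrib
  by (simp add: power2_eq_square)

lemma V_W:
  assumes "lam \<noteq> 0"
  shows "V lam u1 v1 u2 v2 = W (al lam u2 u1 * al lam v2 v1)"
  using assms by (simp add: V_def W_def Vterm_real)

lemma norm_Vterm:
  fixes u1 v1 u2 v2 :: "'a::real_normed_field"
  assumes "lam \<noteq> 0"
  shows "norm (Vterm lam u1 v1 u2 v2 n) =
     (norm (u1\<^sup>2 - u2\<^sup>2) / (2*lam^2) * (norm (v1\<^sup>2 - v2\<^sup>2) / (2*lam^2)))^n / (fact n)^2"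
  unfolding Vterm_alt[OF assms] power_mult_distrib
  by (simp add: norm_mult norm_divide norm_power power2_eq_square)

lemma summable_Vterm:
  fixes u1 v1 u2 v2 :: "'a::real_normed_field"
  assumes "lam \<noteq> 0"
  shows "summable (\<lambda>n. norm (Vterm lam u1 v1 u2 v2 n))"
proof (rule summable_comparison_test)
  define X where "X = norm (u1\<^sup>2 - u2\<^sup>2) / (2*lam^2) * (norm (v1\<^sup>2 - v2\<^sup>2) / (2*lam^2))"
  have X0: "X \<ge> 0" unfolding X_def by simp
  show "\<exists>N. \<forall>n\<ge>N. norm (norm (Vterm lam u1 v1 u2 v2 n)) \<le> inverse (fact n) * X^n"
  proof (intro exI allI impI)
    fix n :: nat
    have f: "(1::real) \<le> fact n" by (rule fact_ge_1)
    have "X^n / (fact n)^2 \<le> X^n / fact n"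
    proof (rule divide_left_mono)
      have "fact n * 1 \<le> fact n * (fact n::real)" by (rule mult_left_mono[OF f]) simp
      then show "(fact n::real) \<le> (fact n)\<^sup>2" by (simp only: power2_eq_square mult_1_right)
    qed (use X0 in auto)
    moreover have "norm (norm (Vterm lam u1 v1 u2 v2 n)) = X^n / (fact n)^2"
      using norm_Vterm[OF assms, of u1 v1 u2 v2 n] by (simp add: X_def)
    moreover have "X^n / fact n = inverse (fact n) * X^n" by (simp add: divide_inverse)
    ultimately show "norm (norm (Vterm lam u1 v1 u2 v2 n)) \<le> inverse (fact n) * X^n"
      using X0 by simp
  qed
  show "summable (\<lambda>n. inverse (fact n) * X^n)" by (rule summable_exp)
qed

lemma J0_eq:
  assumes "lam \<noteq> 0"
  shows "complex_of_real (V lam u1 v1 u2 v2)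
     = bessel_J0 (csqrt (complex_of_real ((u1\<^sup>2 - u2\<^sup>2) * (v1\<^sup>2 - v2\<^sup>2))) / complex_of_real (lam\<^sup>2))"
proof -
  define z where "z = csqrt (complex_of_real ((u1\<^sup>2 - u2\<^sup>2) * (v1\<^sup>2 - v2\<^sup>2))) / complex_of_real (lam\<^sup>2)"
  have sm: "summable (\<lambda>n. Vterm lam u1 v1 u2 v2 n)"
    using summable_Vterm[OF assms] by (rule summable_norm_cancel)
  have z2: "(z/2)^2 = complex_of_real (al lam u2 u1 * al lam v2 v1)"
  proof -
    have "(z/2)^2 = (csqrt (complex_of_real ((u1\<^sup>2 - u2\<^sup>2) * (v1\<^sup>2 - v2\<^sup>2))))^2 / (complex_of_real (lam\<^sup>2))^2 / 4"
      by (simp add: z_def power_divide)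
    also have "\<dots> = complex_of_real (((u1\<^sup>2 - u2\<^sup>2) * (v1\<^sup>2 - v2\<^sup>2)) / (lam^2)^2 / 4)"
      by (simp only: power2_csqrt) simp
    also have "\<dots> = complex_of_real (al lam u2 u1 * al lam v2 v1)"
      using assms by (simp add: al_def power2_eq_square field_simps)
    finally show ?thesis .
  qed
  have "complex_of_real (V lam u1 v1 u2 v2) = (\<Sum>n. complex_of_real (Vterm lam u1 v1 u2 v2 n))"
    unfolding V_def by (rule suminf_of_real[OF sm])
  also have "\<dots> = (\<Sum>n. (-1) ^ n * (z / 2) ^ (2 * n) / of_real ((fact n)\<^sup>2))"
  proof (rule suminf_cong)
    fix n
    have "(z / 2) ^ (2 * n) = ((z/2)^2)^n" by (simp add: power_mult)
    then show "complex_of_real (Vterm lam u1 v1 u2 v2 n) = (-1) ^ n * (z / 2) ^ (2 * n) / of_real ((fact n)\<^sup>2)"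
      using assms by (simp add: Vterm_real z2 cW_def)
  qed
  finally show ?thesis by (simp add: bessel_J0_def z_def)
qed



lemma W_chain [derivative_intros]:
  "(f has_real_derivative f') (at x) \<Longrightarrow> ((\<lambda>x. W (f x)) has_real_derivative Q (f x) * f') (at x)"
  by (rule DERIV_chain2[OF W_deriv])

lemma Q_chain [derivative_intros]:
  "(f has_real_derivative f') (at x) \<Longrightarrow> ((\<lambda>x. Q (f x)) has_real_derivative Q2 (f x) * f') (at x)"
  by (rule DERIV_chain2[OF Q_deriv])

lemma W_cont [continuous_intros]: "continuous_on S f \<Longrightarrow> continuous_on S (\<lambda>x. W (f x))"
  by (rule continuous_on_compose2[of UNIV W]) (auto intro: DERIV_isCont[OF W_deriv] continuous_at_imp_continuous_on)

lemma Q_cont [continuous_intros]: "continuous_on S f \<Longrightarrow> continuous_on S (\<lambda>x. Q (f x))"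
  by (rule continuous_on_compose2[of UNIV Q]) (auto intro: DERIV_isCont[OF Q_deriv] continuous_at_imp_continuous_on)

lemma al_deriv: "((\<lambda>x. al lam c x) has_real_derivative x / lam^2) (at x)" if "lam \<noteq> 0"
  unfolding al_def using that
  by (auto intro!: derivative_eq_intros simp: field_simps)

lemma bQ_deriv:
  assumes "(b has_real_derivative b') (at v)"
  shows "((\<lambda>v. b v * Q (a * b v)) has_real_derivative - W (a * b v) * b') (at v)"
proof -
  have "((\<lambda>v. b v * Q (a * b v)) has_real_derivative b' * Q (a * b v) + b v * (Q2 (a * b v) * (a * b'))) (at v)"
    by (auto intro!: derivative_eq_intros assms)
  moreover have "b' * Q (a * b v) + b v * (Q2 (a * b v) * (a * b')) = b' * (Q (a * b v) + (a * b v) * Q2 (a * b v))"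
    by (simp add: algebra_simps)
  ultimately show ?thesis by (simp add: QW mult.commute)
qed

lemma partial_v:
  assumes "(f has_derivative (\<lambda>h. A * fst h + B * snd h)) (at (u,v))"
  shows "((\<lambda>y. f (u,y)) has_real_derivative B) (at v)"
proof -
  have "((\<lambda>y. (u,y)) has_derivative (\<lambda>h. (0,h))) (at v)"
    by (auto intro!: derivative_eq_intros)
  from has_derivative_compose[OF this assms] show ?thesis by (simp add: has_field_derivative_def)
qed

lemma partial_u:
  assumes "(f has_derivative (\<lambda>h. A * fst h + B * snd h)) (at (u,v))"
  shows "((\<lambda>x. f (x,v)) has_real_derivative A) (at u)"
proof -
  have "((\<lambda>x. (x,v)) has_derivative (\<lambda>h. (h,0))) (at u)"
    by (auto intro!: derivative_eq_intros)
  from has_derivative_compose[OF this assms] show ?thesis by (simp add: has_field_derivative_def)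
qed

lemma ftc:
  fixes f :: "real \<Rightarrow> real"
  assumes "a \<le> b" "\<And>x. (f has_real_derivative f' x) (at x)"
  shows "integral {a..b} f' = f b - f a"
proof (rule integral_unique, rule fundamental_theorem_of_calculus[OF assms(1)])
  fix x assume "x \<in> {a..b}"
  show "(f has_vector_derivative f' x) (at x within {a..b})"
    using assms(2)[of x] by (simp add: has_real_derivative_iff_has_vector_derivative[symmetric] has_field_derivative_at_within)
qed

lemma part4:
  fixes \<phi> :: "real \<times> real \<Rightarrow> real"
  assumes lam: "lam > 0" and tf: "test_function \<phi>"
  shows "(\<lambda>x. Delta_ret lam (fst x) (snd x) u2 v2 * P_op lam \<phi> x) integrable_on UNIV
       \<and> integral UNIV (\<lambda>x. Delta_ret lam (fst x) (snd x) u2 v2 * P_op lam \<phi> x) = 2 * \<phi> (u2, v2)"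
proof -
  have l0: "lam \<noteq> 0" using lam by simp
  from tf have C2: "Ck (Suc (Suc 0)) \<phi>" and cpt: "compact (closure {x. \<phi> x \<noteq> 0})"
    by (auto simp: test_function_def smooth2_def)
  from C2 obtain D1 D2 where dphi: "\<And>x. (\<phi> has_derivative (\<lambda>h. D1 x * fst h + D2 x * snd h)) (at x)"
    and C1: "Ck (Suc 0) D2" by auto
  from C1 obtain E1 E2 where dD2: "\<And>x. (D2 has_derivative (\<lambda>h. E1 x * fst h + E2 x * snd h)) (at x)"
    and cE1: "continuous_on UNIV E1" by auto
  have cphi: "continuous_on UNIV \<phi>"
    by (rule continuous_at_imp_continuous_on) (simp add: has_derivative_continuous[OF dphi])
  have cD2: "continuous_on UNIV D2"
    by (rule continuous_at_imp_continuous_on) (simp add: has_derivative_continuous[OF dD2])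
  from compact_imp_bounded[OF cpt] obtain R where R: "\<And>x. x \<in> closure {x. \<phi> x \<noteq> 0} \<Longrightarrow> norm x \<le> R"
    unfolding bounded_iff by blast
  have phi0: "\<phi> (u,v) = 0" if "R < \<bar>u\<bar> \<or> R < \<bar>v\<bar>" for u v
  proof (rule ccontr)
    assume "\<phi> (u,v) \<noteq> 0"
    then have "(u,v) \<in> closure {x. \<phi> x \<noteq> 0}" by (intro subsetD[OF closure_subset]) simp
    then have "norm (u,v) \<le> R" by (rule R)
    moreover have "\<bar>u\<bar> \<le> norm (u,v)" "\<bar>v\<bar> \<le> norm (u,v)"
      using norm_fst_le[of u v] norm_snd_le[of v u] by auto
    ultimately show False using that by linarith
  qed
  have pv: "((\<lambda>y. \<phi> (u,y)) has_real_derivative D2 (u,v)) (at v)" for u v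
    by (rule partial_v[OF dphi])
  have pv2: "((\<lambda>x. D2 (x,v)) has_real_derivative E1 (u,v)) (at u)" for u v
    by (rule partial_u[OF dD2])
  have D20: "D2 (u,v) = 0" if "R < \<bar>u\<bar> \<or> R < \<bar>v\<bar>" for u v
  proof (cases "R < \<bar>u\<bar>")
    case True
    show ?thesis
      by (rule DERIV_local_const[OF pv, of 1]) (use True phi0 in auto)
  next
    case False
    then have Rv: "R < \<bar>v\<bar>" using that by auto
    show ?thesis
    proof (rule DERIV_local_const[OF pv, of "\<bar>v\<bar> - R"])
      show "\<forall>y. \<bar>v - y\<bar> < \<bar>v\<bar> - R \<longrightarrow> \<phi> (u, v) = \<phi> (u, y)"
      proof (intro allI impI)
        fix y assume "\<bar>v - y\<bar> < \<bar>v\<bar> - R"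
        then have "R < \<bar>y\<bar>" by linarith
        then show "\<phi> (u, v) = \<phi> (u, y)" using phi0 Rv by auto
      qed
    qed (use Rv in auto)
  qed
  have E10: "E1 (u,v) = 0" if "R < \<bar>u\<bar> \<or> R < \<bar>v\<bar>" for u v
  proof (cases "R < \<bar>v\<bar>")
    case True
    show ?thesis
      by (rule DERIV_local_const[OF pv2, of 1]) (use True D20 in auto)
  next
    case False
    then have Ru: "R < \<bar>u\<bar>" using that by auto
    show ?thesis
    proof (rule DERIV_local_const[OF pv2, of "\<bar>u\<bar> - R"])
      show "\<forall>y. \<bar>u - y\<bar> < \<bar>u\<bar> - R \<longrightarrow> D2 (u, v) = D2 (y, v)"
      proof (intro allI impI)
        fix y assume "\<bar>u - y\<bar> < \<bar>u\<bar> - R"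
        then have "R < \<bar>y\<bar>" by linarith
        then show "D2 (u, v) = D2 (y, v)" using D20 Ru by auto
      qed
    qed (use Ru in auto)
  qed
  have duv: "d_uv \<phi> (u,v) = E1 (u,v)" for u v
  proof -
    have "(\<lambda>x. deriv (\<lambda>y. \<phi> (x, y)) v) = (\<lambda>x. D2 (x, v))"
      by (rule ext, rule DERIV_imp_deriv[OF pv])
    then show ?thesis by (simp add: d_uv_def DERIV_imp_deriv[OF pv2])
  qed
  define Ub where "Ub = \<bar>u2\<bar> + \<bar>R\<bar> + 1"
  define Wb where "Wb = \<bar>v2\<bar> + \<bar>R\<bar> + 1"
  have Ub: "u2 \<le> Ub" "R < \<bar>Ub\<bar>" unfolding Ub_def by auto
  have Wb: "v2 \<le> Wb" "R < \<bar>Wb\<bar>" unfolding Wb_def by auto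
  define B where "B = cbox (u2,v2) (Ub,Wb)"
  define a where "a u = al lam u2 u" for u
  define b where "b v = al lam v2 v" for v
  have da: "(a has_real_derivative u / lam^2) (at u)" for u
    unfolding a_def[abs_def] by (rule al_deriv[OF l0])
  have db: "(b has_real_derivative v / lam^2) (at v)" for v
    unfolding b_def[abs_def] by (rule al_deriv[OF l0])
  have a0: "a u2 = 0" and b0: "b v2 = 0" by (simp_all add: a_def b_def al_def)
  define Vf where "Vf x = W (a (fst x) * b (snd x))" for x
  define Vu where "Vu x = Q (a (fst x) * b (snd x)) * (fst x / lam^2) * b (snd x)" for x
  define h1 where "h1 x = Vu x * D2 x + Vf x * E1 x" for x
  define h2 where "h2 x = - (1/lam^4) * fst x * snd x * Vf x * \<phi> x + Vu x * D2 x" for x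
  define g where "g x = 1/2 * V lam (fst x) (snd x) u2 v2 * (4 * E1 x + 4 / lam^4 * fst x * snd x * \<phi> x)" for x
  have VfV: "V lam u v u2 v2 = Vf (u,v)" for u v
    by (simp add: V_W[OF l0] Vf_def a_def b_def)
  have geq: "g x = 2 * (h1 x - h2 x)" for x
    using l0 by (cases x) (simp add: g_def h1_def h2_def VfV field_simps)
  have cVf: "continuous_on UNIV Vf"
    unfolding Vf_def[abs_def] a_def b_def al_def by (intro continuous_intros) (use l0 in auto)
  have cVu: "continuous_on UNIV Vu"
    unfolding Vu_def[abs_def] a_def b_def al_def by (intro continuous_intros) (use l0 in auto)
  have ch1: "continuous_on UNIV h1"
    unfolding h1_def[abs_def] by (intro continuous_intros cVf cVu cD2 cE1)
  have ch2: "continuous_on UNIV h2"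
    unfolding h2_def[abs_def] by (intro continuous_intros cVf cVu cD2 cphi)
  have ieq: "Delta_ret lam (fst x) (snd x) u2 v2 * P_op lam \<phi> x = (if x \<in> B then g x else 0)" for x
  proof (cases x)
    case (Pair u v)
    have P: "P_op lam \<phi> (u,v) = 4 * E1 (u,v) + 4 / lam^4 * u * v * \<phi> (u,v)"
      by (simp add: P_op_def duv)
    show ?thesis
    proof (cases "x \<in> B")
      case True
      then have "u2 \<le> u" "v2 \<le> v" using Pair by (auto simp: B_def)
      then show ?thesis using True Pair P
        by (simp add: Delta_ret_def heaviside_def g_def)
    next
      case False
      show ?thesis
      proof (cases "u2 \<le> u \<and> v2 \<le> v")
        case True
        with False Pair have "Ub < u \<or> Wb < v" by (auto simp: B_def)
        then have "R < \<bar>u\<bar> \<or> R < \<bar>v\<bar>" using Ub Wb unfolding Ub_def Wb_def by auto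
        then show ?thesis using False Pair P phi0 E10 by simp
      next
        case nb: False
        then show ?thesis using False Pair by (auto simp: Delta_ret_def heaviside_def)
      qed
    qed
  qed
  have I1: "integral B h1 = \<phi> (u2, v2)"
  proof -
    have inner: "integral {u2..Ub} (\<lambda>u. h1 (u,v)) = - D2 (u2, v)" for v
    proof -
      have d: "((\<lambda>u. W (a u * b v) * D2 (u,v)) has_real_derivative h1 (u,v)) (at u)" for u
      proof -
        have A: "((\<lambda>u. a u * b v) has_real_derivative u / lam^2 * b v) (at u)"
          by (rule DERIV_cmult_right[OF da])
        from DERIV_mult[OF W_chain[OF A] pv2[where u=u and v=v]]
        show ?thesis by (rule DERIV_cong) (simp add: h1_def Vu_def Vf_def algebra_simps)
      qed
      have "integral {u2..Ub} (\<lambda>u. h1 (u,v)) = W (a Ub * b v) * D2 (Ub,v) - W (a u2 * b v) * D2 (u2,v)"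
        by (rule ftc[OF Ub(1) d])
      then show ?thesis using D20[of Ub v] Ub(2) by (simp add: a0 W0)
    qed
    have "integral B h1 = integral (cbox u2 Ub) (\<lambda>u. integral (cbox v2 Wb) (\<lambda>v. h1 (u,v)))"
      unfolding B_def by (rule integral_prod_continuous, rule continuous_on_subset[OF ch1]) auto
    also have "\<dots> = integral (cbox v2 Wb) (\<lambda>v. integral (cbox u2 Ub) (\<lambda>u. h1 (u,v)))"
    proof (rule integral_swap_continuous[where f="\<lambda>u v. h1 (u,v)"])
      show "continuous_on (cbox (u2, v2) (Ub, Wb)) (\<lambda>(x, y). h1 (x, y))"
        unfolding case_prod_eta by (rule continuous_on_subset[OF ch1]) auto
    qed
    also have "\<dots> = integral {v2..Wb} (\<lambda>v. - D2 (u2, v))" using inner by simp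
    also have "\<dots> = - \<phi> (u2, Wb) - (- \<phi> (u2, v2))"
      by (rule ftc[OF Wb(1)], rule DERIV_minus[OF pv])
    also have "\<dots> = \<phi> (u2, v2)" using phi0[of u2 Wb] Wb(2) by simp
    finally show ?thesis .
  qed
  have I2: "integral B h2 = 0"
  proof -
    have inner: "integral {v2..Wb} (\<lambda>v. h2 (u,v)) = 0" for u
    proof -
      have d: "((\<lambda>v. u / lam^2 * (b v * Q (a u * b v)) * \<phi> (u,v)) has_real_derivative h2 (u,v)) (at v)" for v
      proof -
        have "((\<lambda>v. u / lam^2 * (b v * Q (a u * b v)) * \<phi> (u,v)) has_real_derivative
               u / lam^2 * (- W (a u * b v) * (v / lam^2)) * \<phi> (u,v) + u / lam^2 * (b v * Q (a u * b v)) * D2 (u,v)) (at v)"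
          by (rule DERIV_mult[OF DERIV_cmult[OF bQ_deriv[OF db]] pv[where u=u and v=v], THEN DERIV_cong])
             (simp add: algebra_simps)
        moreover have "u / lam^2 * (- W (a u * b v) * (v / lam^2)) * \<phi> (u,v) + u / lam^2 * (b v * Q (a u * b v)) * D2 (u,v)
            = h2 (u,v)"
          using l0 by (simp add: h2_def Vu_def Vf_def field_simps)
        ultimately show ?thesis by simp
      qed
      have "integral {v2..Wb} (\<lambda>v. h2 (u,v)) = u / lam^2 * (b Wb * Q (a u * b Wb)) * \<phi> (u,Wb) - u / lam^2 * (b v2 * Q (a u * b v2)) * \<phi> (u,v2)"
        by (rule ftc[OF Wb(1) d])
      then show ?thesis using phi0[of u Wb] Wb(2) by (simp add: b0)
    qed
    have "integral B h2 = integral (cbox u2 Ub) (\<lambda>u. integral (cbox v2 Wb) (\<lambda>v. h2 (u,v)))"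
      unfolding B_def by (rule integral_prod_continuous, rule continuous_on_subset[OF ch2]) auto
    also have "\<dots> = 0" using inner by simp
    finally show ?thesis .
  qed
  have int1: "(h1 has_integral integral B h1) B"
    unfolding B_def by (rule integrable_integral, rule integrable_continuous, rule continuous_on_subset[OF ch1]) auto
  have int2: "(h2 has_integral integral B h2) B"
    unfolding B_def by (rule integrable_integral, rule integrable_continuous, rule continuous_on_subset[OF ch2]) auto
  have "((\<lambda>x. 2 * (h1 x - h2 x)) has_integral 2 * (integral B h1 - integral B h2)) B"
    by (intro has_integral_mult_right has_integral_diff int1 int2)
  then have "(g has_integral 2 * \<phi> (u2, v2)) B" using I1 I2 by (simp add: geq[abs_def])
  then have "((\<lambda>x. if x \<in> B then g x else 0) has_integral 2 * \<phi> (u2, v2)) UNIV"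
    by (simp only: has_integral_restrict_UNIV)
  then have "((\<lambda>x. Delta_ret lam (fst x) (snd x) u2 v2 * P_op lam \<phi> x) has_integral 2 * \<phi> (u2, v2)) UNIV"
    by (simp only: ieq)
  then show ?thesis by (auto intro: has_integral_integrable integral_unique)
qed


theorem mainTheorem1:
  fixes lam :: real
  assumes "lam > 0"
  shows "(\<forall>u1 v1 u2 v2 :: complex. summable (\<lambda>n. norm (Vterm lam u1 v1 u2 v2 n)))
       \<and> (\<forall>u1 v1 u2 v2 :: real. summable (\<lambda>n. Vterm lam u1 v1 u2 v2 n))
       \<and> (\<forall>u1 v1 u2 v2. \<not> (u1 \<ge> u2 \<and> v1 \<ge> v2) \<longrightarrow> Delta_ret lam u1 v1 u2 v2 = 0)
       \<and> (\<forall>u2 v2 \<phi>. test_function \<phi> \<longrightarrow>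
            (\<lambda>x. Delta_ret lam (fst x) (snd x) u2 v2 * P_op lam \<phi> x) integrable_on UNIV
          \<and> integral UNIV (\<lambda>x. Delta_ret lam (fst x) (snd x) u2 v2 * P_op lam \<phi> x)
              = 2 * \<phi> (u2, v2))
       \<and> (\<forall>u1 v1 u2 v2. complex_of_real (Delta_ret lam u1 v1 u2 v2)
            = 1 / 2 * complex_of_real (heaviside (u1 - u2) * heaviside (v1 - v2))
              * bessel_J0 (csqrt (complex_of_real ((u1\<^sup>2 - u2\<^sup>2) * (v1\<^sup>2 - v2\<^sup>2))) / complex_of_real (lam\<^sup>2)))"
proof -
  have l0: "lam \<noteq> 0" using assms by simp
  have P1: "\<forall>u1 v1 u2 v2 :: complex. summable (\<lambda>n. norm (Vterm lam u1 v1 u2 v2 n))"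
    using summable_Vterm[OF l0] by blast
  have P2: "\<forall>u1 v1 u2 v2 :: real. summable (\<lambda>n. Vterm lam u1 v1 u2 v2 n)"
    using summable_norm_cancel[OF summable_Vterm[OF l0]] by blast
  have P3: "\<forall>u1 v1 u2 v2. \<not> (u1 \<ge> u2 \<and> v1 \<ge> v2) \<longrightarrow> Delta_ret lam u1 v1 u2 v2 = 0"
    by (auto simp: Delta_ret_def heaviside_def)
  have P4: "\<forall>u2 v2 \<phi>. test_function \<phi> \<longrightarrow>
            (\<lambda>x. Delta_ret lam (fst x) (snd x) u2 v2 * P_op lam \<phi> x) integrable_on UNIV
          \<and> integral UNIV (\<lambda>x. Delta_ret lam (fst x) (snd x) u2 v2 * P_op lam \<phi> x)
              = 2 * \<phi> (u2, v2)"
    using part4[OF assms] by blast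
  have P5: "\<forall>u1 v1 u2 v2. complex_of_real (Delta_ret lam u1 v1 u2 v2)
            = 1 / 2 * complex_of_real (heaviside (u1 - u2) * heaviside (v1 - v2))
              * bessel_J0 (csqrt (complex_of_real ((u1\<^sup>2 - u2\<^sup>2) * (v1\<^sup>2 - v2\<^sup>2))) / complex_of_real (lam\<^sup>2))"
  proof (intro allI)
    fix u1 v1 u2 v2
    have "complex_of_real (Delta_ret lam u1 v1 u2 v2)
        = 1 / 2 * complex_of_real (heaviside (u1 - u2) * heaviside (v1 - v2)) * complex_of_real (V lam u1 v1 u2 v2)"
      by (simp add: Delta_ret_def)
    then show "complex_of_real (Delta_ret lam u1 v1 u2 v2)
            = 1 / 2 * complex_of_real (heaviside (u1 - u2) * heaviside (v1 - v2))
              * bessel_J0 (csqrt (complex_of_real ((u1\<^sup>2 - u2\<^sup>2) * (v1\<^sup>2 - v2\<^sup>2))) / complex_of_real (lam\<^sup>2))"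
      by (simp only: J0_eq[OF l0])
  qed
  show ?thesis using P1 P2 P3 P4 P5 by blast
qed

end
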